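(* Let $(H_i<G_i)_{i\in\mathbb N}$ be a sequence of inclusions of groups, let $\omega$ be a free ultrafilter on $\mathbb N$, and let $\mathbf G=\prod_\omega G_i$ and $\mathbf H=\prod_\omega H_i$ be algebraic ultraproducts. Then $\ast_{\mathbf H}\mathbf G$ naturally embeds into the algebraic ultraproduct $\mathbf K=\prod_\omega \ast_{H_i}G_i$.
   Context: For a sequence of groups $(L_i)$ and a free ultrafilter $\omega$ on $\mathbb N$, the algebraic ultraproduct is $\prod_\omega L_i=(\prod_{i\in\mathbb N}L_i)/N$ where $N=\{(g_i): \{i: g_i=1\}\in\omega\}$. For a group $G$ and subgroup $H<G$, $\ast_H G$ denotes the amalgamated free product of countably infinitely many copies of $G$ over the common subgroup $H$. *)

theory Defs
  imports "HOL-Algebra.Algebra"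
begin

definition free_ultrafilter :: "nat set set \<Rightarrow> bool" where
  "free_ultrafilter U \<longleftrightarrow>
     UNIV \<in> U \<and> {} \<notin> U \<and>
     (\<forall>A B. A \<in> U \<longrightarrow> A \<subseteq> B \<longrightarrow> B \<in> U) \<and>
     (\<forall>A B. A \<in> U \<longrightarrow> B \<in> U \<longrightarrow> A \<inter> B \<in> U) \<and>
     (\<forall>A. A \<in> U \<or> - A \<in> U) \<and>
     (\<forall>A. finite A \<longrightarrow> A \<notin> U)"

definition ultra_null :: "(nat \<Rightarrow> ('g, 'b) monoid_scheme) \<Rightarrow> nat set set \<Rightarrow> (nat \<Rightarrow> 'g) set" where
  "ultra_null G U = {f \<in> carrier (product_group UNIV G). {i. f i = \<one>\<^bsub>G i\<^esub>} \<in> U}"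

definition ultraprod :: "(nat \<Rightarrow> ('g, 'b) monoid_scheme) \<Rightarrow> nat set set \<Rightarrow> (nat \<Rightarrow> 'g) set monoid" where
  "ultraprod G U = product_group UNIV G Mod ultra_null G U"

definition ultra_class :: "(nat \<Rightarrow> ('g, 'b) monoid_scheme) \<Rightarrow> nat set set \<Rightarrow> (nat \<Rightarrow> 'g) \<Rightarrow> (nat \<Rightarrow> 'g) set" where
  "ultra_class G U f = ultra_null G U #>\<^bsub>product_group UNIV G\<^esub> f"

text \<open>For subgroups H_i of G_i, prod_omega H_i viewed (via the natural embedding)
  as the subgroup of prod_omega G_i consisting of the classes of sequences in prod H_i.\<close>
definition ultraprod_sub :: "(nat \<Rightarrow> ('g, 'b) monoid_scheme) \<Rightarrow> (nat \<Rightarrow> 'g set) \<Rightarrow> nat set set \<Rightarrow> (nat \<Rightarrow> 'g) set set" where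
  "ultraprod_sub G H U = {ultra_class G U f | f. \<forall>i. f i \<in> H i}"

text \<open>Words are lists of letters (j, g): g in the j-th copy of G.\<close>
inductive amalg_rel :: "('g, 'b) monoid_scheme \<Rightarrow> 'g set \<Rightarrow> (nat \<times> 'g) list \<Rightarrow> (nat \<times> 'g) list \<Rightarrow> bool"
  for G :: "('g, 'b) monoid_scheme" and H :: "'g set" where
  refl: "amalg_rel G H w w"
| sym: "amalg_rel G H v w \<Longrightarrow> amalg_rel G H w v"
| trans: "amalg_rel G H u v \<Longrightarrow> amalg_rel G H v w \<Longrightarrow> amalg_rel G H u w"
| cong: "amalg_rel G H v w \<Longrightarrow> amalg_rel G H (x @ v @ y) (x @ w @ y)"
| mult: "g \<in> carrier G \<Longrightarrow> g' \<in> carrier G \<Longrightarrow>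
           amalg_rel G H [(j, g), (j, g')] [(j, g \<otimes>\<^bsub>G\<^esub> g')]"
| one: "amalg_rel G H [(j, \<one>\<^bsub>G\<^esub>)] []"
| amalg: "h \<in> H \<Longrightarrow> amalg_rel G H [(j, h)] [(k, h)]"

definition amalg_class :: "('g, 'b) monoid_scheme \<Rightarrow> 'g set \<Rightarrow> (nat \<times> 'g) list \<Rightarrow> (nat \<times> 'g) list set" where
  "amalg_class G H w = {v. amalg_rel G H w v}"

definition amalg_free_product :: "('g, 'b) monoid_scheme \<Rightarrow> 'g set \<Rightarrow> (nat \<times> 'g) list set monoid" where
  "amalg_free_product G H =
     \<lparr>carrier = amalg_class G H ` lists (UNIV \<times> carrier G),
      monoid.mult = (\<lambda>A B. amalg_class G H ((SOME a. a \<in> A) @ (SOME b. b \<in> B))),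
      one = amalg_class G H []\<rparr>"

definition amalg_incl :: "('g, 'b) monoid_scheme \<Rightarrow> 'g set \<Rightarrow> nat \<Rightarrow> 'g \<Rightarrow> (nat \<times> 'g) list set" where
  "amalg_incl G H j g = amalg_class G H [(j, g)]"

end

theory Submission
  imports Defs
begin

abbreviation "arel \<equiv> amalg_rel"

lemma arel_app_left: "amalg_rel G H v w \<Longrightarrow> amalg_rel G H (x @ v) (x @ w)"
  using amalg_rel.cong[of G H v w x "[]"] by simp
lemma arel_app_right: "amalg_rel G H v w \<Longrightarrow> amalg_rel G H (v @ y) (w @ y)"
  using amalg_rel.cong[of G H v w "[]" y] by simp
lemma arel_Cons: "amalg_rel G H v w \<Longrightarrow> amalg_rel G H (a # v) (a # w)"
  using arel_app_left[of G H v w "[a]"] by simp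
lemma arel_app: "amalg_rel G H v w \<Longrightarrow> amalg_rel G H v' w' \<Longrightarrow> amalg_rel G H (v @ v') (w @ w')"
  by (meson amalg_rel.trans arel_app_left arel_app_right)

lemma arel_lists:
  assumes "amalg_rel G H v w" "H \<subseteq> carrier G" "monoid G"
  shows "v \<in> lists (UNIV \<times> carrier G) \<longleftrightarrow> w \<in> lists (UNIV \<times> carrier G)"
  using assms by induction (auto intro: monoid.m_closed)

lemma amalg_class_eq: "amalg_class G H v = amalg_class G H w \<longleftrightarrow> amalg_rel G H v w"
proof
  assume "amalg_class G H v = amalg_class G H w"
  moreover have "w \<in> amalg_class G H w" by (simp add: amalg_class_def amalg_rel.refl)
  ultimately have "w \<in> amalg_class G H v" by simp
  then show "amalg_rel G H v w" by (simp add: amalg_class_def)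
next
  assume r: "amalg_rel G H v w"
  show "amalg_class G H v = amalg_class G H w"
    unfolding amalg_class_def using r amalg_rel.trans amalg_rel.sym by blast
qed

lemma amalg_class_some: "amalg_rel G H w (SOME a. a \<in> amalg_class G H w)"
  unfolding amalg_class_def by (rule someI2[of _ w]) (auto intro: amalg_rel.refl)

lemma amalg_mult:
  "amalg_class G H v \<otimes>\<^bsub>amalg_free_product G H\<^esub> amalg_class G H w = amalg_class G H (v @ w)"
  unfolding amalg_free_product_def
  apply simp
  apply (subst amalg_class_eq)
  apply (rule amalg_rel.sym, rule arel_app; rule amalg_class_some)
  done

lemma amalg_one: "\<one>\<^bsub>amalg_free_product G H\<^esub> = amalg_class G H []"
  by (simp add: amalg_free_product_def)
lemma amalg_carrier: "carrier (amalg_free_product G H) = amalg_class G H ` lists (UNIV \<times> carrier G)"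
  by (simp add: amalg_free_product_def)

definition invw :: "('g, 'b) monoid_scheme \<Rightarrow> (nat \<times> 'g) list \<Rightarrow> (nat \<times> 'g) list" where
  "invw G w = rev (map (\<lambda>(j,g). (j, inv\<^bsub>G\<^esub> g)) w)"

lemma invw_Cons: "invw G ((j,g)#w) = invw G w @ [(j, inv\<^bsub>G\<^esub> g)]"
  by (simp add: invw_def)

lemma invw_lists: "group G \<Longrightarrow> w \<in> lists (UNIV \<times> carrier G) \<Longrightarrow> invw G w \<in> lists (UNIV \<times> carrier G)"
  by (force simp: invw_def intro: group.inv_closed)

lemma invw_rel:
  assumes "group G" "w \<in> lists (UNIV \<times> carrier G)"
  shows "amalg_rel G H (invw G w @ w) []"
  using assms(2)
proof (induction w)
  case Nil then show ?case by (simp add: invw_def amalg_rel.refl)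
next
  case (Cons a w)
  obtain j g where a: "a = (j,g)" by force
  have g: "g \<in> carrier G" using Cons a by auto
  have "invw G (a#w) @ a # w = invw G w @ ([(j, inv\<^bsub>G\<^esub> g), (j,g)] @ w)"
    by (simp add: a invw_Cons)
  moreover have "amalg_rel G H [(j, inv\<^bsub>G\<^esub> g), (j,g)] []"
  proof -
    have "amalg_rel G H [(j, inv\<^bsub>G\<^esub> g), (j,g)] [(j, inv\<^bsub>G\<^esub> g \<otimes>\<^bsub>G\<^esub> g)]"
      using g assms(1) by (intro amalg_rel.mult) auto
    moreover have "inv\<^bsub>G\<^esub> g \<otimes>\<^bsub>G\<^esub> g = \<one>\<^bsub>G\<^esub>" using g assms(1) by (simp add: group.l_inv)
    ultimately show ?thesis by (metis amalg_rel.one amalg_rel.trans)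
  qed
  ultimately have "amalg_rel G H (invw G (a#w) @ a # w) (invw G w @ ([] @ w))"
    by (metis arel_app_left arel_app_right)
  then show ?case using Cons by (metis amalg_rel.trans append_Nil)
qed

lemma amalg_carrierE:
  assumes "x \<in> carrier (amalg_free_product G H)"
  obtains v where "v \<in> lists (UNIV \<times> carrier G)" "x = amalg_class G H v"
  using assms unfolding amalg_carrier by blast

lemma amalg_carrierI:
  "v \<in> lists (UNIV \<times> carrier G) \<Longrightarrow> amalg_class G H v \<in> carrier (amalg_free_product G H)"
  unfolding amalg_carrier by blast

lemma amalg_group:
  assumes "group G" "subgroup H G"
  shows "group (amalg_free_product G H)"
proof (rule groupI)
  show "x \<otimes>\<^bsub>amalg_free_product G H\<^esub> y \<in> carrier (amalg_free_product G H)"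
    if xc: "x \<in> carrier (amalg_free_product G H)" and yc: "y \<in> carrier (amalg_free_product G H)" for x y
  proof -
    obtain v where v: "v \<in> lists (UNIV \<times> carrier G)" "x = amalg_class G H v" using xc by (rule amalg_carrierE)
    obtain w where w: "w \<in> lists (UNIV \<times> carrier G)" "y = amalg_class G H w" using yc by (rule amalg_carrierE)
    have "v @ w \<in> lists (UNIV \<times> carrier G)" using v w by simp
    then show ?thesis unfolding v w amalg_mult by (rule amalg_carrierI)
  qed
  show "\<one>\<^bsub>amalg_free_product G H\<^esub> \<in> carrier (amalg_free_product G H)"
    unfolding amalg_one by (rule amalg_carrierI) simp
  show "x \<otimes>\<^bsub>amalg_free_product G H\<^esub> y \<otimes>\<^bsub>amalg_free_product G H\<^esub> z =
        x \<otimes>\<^bsub>amalg_free_product G H\<^esub> (y \<otimes>\<^bsub>amalg_free_product G H\<^esub> z)"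
    if xc: "x \<in> carrier (amalg_free_product G H)" and yc: "y \<in> carrier (amalg_free_product G H)"
       and zc: "z \<in> carrier (amalg_free_product G H)" for x y z
  proof -
    obtain v where v: "x = amalg_class G H v" using xc by (rule amalg_carrierE)
    obtain w where w: "y = amalg_class G H w" using yc by (rule amalg_carrierE)
    obtain u where u: "z = amalg_class G H u" using zc by (rule amalg_carrierE)
    show ?thesis unfolding u v w amalg_mult by simp
  qed
  show "\<one>\<^bsub>amalg_free_product G H\<^esub> \<otimes>\<^bsub>amalg_free_product G H\<^esub> x = x"
    if xc: "x \<in> carrier (amalg_free_product G H)" for x
  proof -
    obtain v where v: "x = amalg_class G H v" using xc by (rule amalg_carrierE)
    show ?thesis unfolding v amalg_mult amalg_one by simp
  qed
  show "\<exists>y\<in>carrier (amalg_free_product G H). y \<otimes>\<^bsub>amalg_free_product G H\<^esub> x = \<one>\<^bsub>amalg_free_product G H\<^esub>"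
    if xc: "x \<in> carrier (amalg_free_product G H)" for x
  proof -
    obtain w where w: "w \<in> lists (UNIV \<times> carrier G)" "x = amalg_class G H w"
      using xc by (rule amalg_carrierE)
    have "amalg_class G H (invw G w) \<otimes>\<^bsub>amalg_free_product G H\<^esub> x = \<one>\<^bsub>amalg_free_product G H\<^esub>"
      unfolding w amalg_mult amalg_one amalg_class_eq by (rule invw_rel[OF assms(1) w(1)])
    moreover have "amalg_class G H (invw G w) \<in> carrier (amalg_free_product G H)"
      by (rule amalg_carrierI[OF invw_lists[OF assms(1) w(1)]])
    ultimately show ?thesis by blast
  qed
qed


fun alt :: "(nat \<times> 'g) list \<Rightarrow> bool" where
  "alt [] = True" | "alt [x] = True" | "alt (x # y # r) = (fst x \<noteq> fst y \<and> alt (y # r))"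

lemma alt_tl: "alt (x # r) \<Longrightarrow> alt r"
  by (cases r) auto

lemma alt_map: "alt (map (\<lambda>(j,x). (j, f j x)) r) = alt r"
  by (induction r rule: alt.induct) auto

definition starts :: "nat \<Rightarrow> (nat \<times> 'g) list \<Rightarrow> bool" where
  "starts j L \<longleftrightarrow> L \<noteq> [] \<and> fst (hd L) = j"

locale amctx = group G for G (structure) + fixes H assumes sgH: "subgroup H G"
begin

lemma HG: "H \<subseteq> carrier G" using sgH subgroup.subset by blast
lemma Hmem: "h \<in> H \<Longrightarrow> h \<in> carrier G" using HG by blast

definition rep where "rep x = (if x \<in> H then \<one> else (SOME t. t \<in> H #> x))"
definition hp where "hp x = x \<otimes> inv (rep x)"

lemma rep_in: assumes "x \<in> carrier G" shows "rep x \<in> H #> x"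
proof (cases "x \<in> H")
  case True
  then have "H #> x = H" using coset_join2 assms sgH by blast
  then show ?thesis using True by (simp add: rep_def subgroup.one_closed[OF sgH])
next
  case False
  have "x \<in> H #> x" using rcos_self assms sgH by blast
  then show ?thesis using False unfolding rep_def by (metis someI_ex)
qed

lemma rep_carrier: "x \<in> carrier G \<Longrightarrow> rep x \<in> carrier G"
  using rep_in subgroup.elemrcos_carrier[OF sgH is_group] by blast

lemma hp_H: assumes "x \<in> carrier G" shows "hp x \<in> H"
proof -
  have "rep x \<otimes> inv x \<in> H" using subgroup.rcos_module_imp[OF sgH is_group assms rep_in[OF assms]] .
  then have "inv (rep x \<otimes> inv x) \<in> H" using subgroup.m_inv_closed[OF sgH] by blast
  also have "inv (rep x \<otimes> inv x) = x \<otimes> inv (rep x)"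
    using assms rep_carrier[OF assms] by (simp add: inv_mult_group)
  finally show ?thesis by (simp add: hp_def)
qed

lemma hp_carrier: "x \<in> carrier G \<Longrightarrow> hp x \<in> carrier G" using hp_H Hmem by blast

lemma hp_rep: "x \<in> carrier G \<Longrightarrow> hp x \<otimes> rep x = x"
  by (simp add: hp_def m_assoc rep_carrier)

lemma rep_one_iff: assumes "x \<in> carrier G" shows "rep x = \<one> \<longleftrightarrow> x \<in> H"
proof
  assume "rep x = \<one>"
  then have "hp x = x" using hp_rep[OF assms] hp_carrier[OF assms] by simp
  then show "x \<in> H" using hp_H[OF assms] by metis
qed (simp add: rep_def)

lemma rep_Hmult: assumes "h \<in> H" "x \<in> carrier G" shows "rep (h \<otimes> x) = rep x"
proof -
  have hc: "h \<in> carrier G" using assms Hmem by blast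
  have "H #> (h \<otimes> x) = (H #> h) #> x" using coset_mult_assoc HG hc assms by simp
  also have "\<dots> = H #> x" using subgroup.rcos_const[OF sgH is_group assms(1)] by simp
  finally have c: "H #> (h \<otimes> x) = H #> x" .
  have "h \<otimes> x \<in> H \<longleftrightarrow> x \<in> H"
  proof
    assume "h \<otimes> x \<in> H"
    then have "inv h \<otimes> (h \<otimes> x) \<in> H" using assms subgroup.m_closed[OF sgH] subgroup.m_inv_closed[OF sgH] by blast
    then show "x \<in> H" using hc assms by (simp add: m_assoc[symmetric])
  qed (use assms subgroup.m_closed[OF sgH] in blast)
  then show ?thesis unfolding rep_def c by simp
qed

lemma rep_rep: assumes "x \<in> carrier G" shows "rep (rep x) = rep x"
proof -
  have r: "rep x \<in> H #> x" using rep_in[OF assms] .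
  have c: "H #> rep x = H #> x" using repr_independence[OF r assms sgH] by simp
  show ?thesis
  proof (cases "x \<in> H")
    case True
    then show ?thesis by (simp add: rep_def subgroup.one_closed[OF sgH])
  next
    case False
    have "rep x \<notin> H"
    proof
      assume "rep x \<in> H"
      then have "hp x \<otimes> rep x \<in> H" using hp_H[OF assms] subgroup.m_closed[OF sgH] by blast
      then show False using hp_rep[OF assms] False by simp
    qed
    then show ?thesis unfolding rep_def[of "rep x"] c using False by (simp add: rep_def)
  qed
qed

lemma hp_Hmult_rep: assumes "h \<in> H" "t \<in> carrier G" "rep t = t" shows "hp (h \<otimes> t) = h"
  using assms by (simp add: hp_def rep_Hmult m_assoc Hmem)

end
context amctx begin
definition validL where
  "validL L \<longleftrightarrow> alt L \<and> (\<forall>(j,t)\<in>set L. t \<in> carrier G \<and> rep t = t \<and> t \<noteq> \<one>)"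
definition XS where "XS = {(h, L). h \<in> H \<and> validL L}"

definition dec where
  "dec j s = (case snd s of [] \<Rightarrow> s | (k,t)#L' \<Rightarrow> if k = j then (fst s \<otimes> t, L') else s)"
definition nrm where
  "nrm j y L0 = (hp y, if rep y = \<one> then L0 else (j, rep y) # L0)"
definition act where
  "act j g s = nrm j (g \<otimes> fst (dec j s)) (snd (dec j s))"

lemma validL_tl: "validL (x # L) \<Longrightarrow> validL L"
  by (auto simp: validL_def intro: alt_tl)

lemma dec_props:
  assumes "s \<in> XS"
  shows "fst (dec j s) \<in> carrier G" "validL (snd (dec j s))" "\<not> starts j (snd (dec j s))"
proof -
  obtain h L where s: "s = (h, L)" "h \<in> H" "validL L" using assms by (auto simp: XS_def)
  have "fst (dec j s) \<in> carrier G \<and> validL (snd (dec j s)) \<and> \<not> starts j (snd (dec j s))"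
  proof (cases L)
    case Nil then show ?thesis using s by (simp add: dec_def starts_def Hmem)
  next
    case (Cons a L')
    obtain k t where a: "a = (k,t)" by force
    show ?thesis
    proof (cases "k = j")
      case True
      have t: "t \<in> carrier G" using s Cons a by (auto simp: validL_def)
      have "\<not> starts j L'"
        using s(3) Cons a True by (cases L') (auto simp: validL_def starts_def)
      then show ?thesis using s Cons a True t validL_tl[of a L'] by (simp add: dec_def Hmem)
    next
      case False then show ?thesis using s Cons a by (simp add: dec_def Hmem starts_def)
    qed
  qed
  then show "fst (dec j s) \<in> carrier G" "validL (snd (dec j s))" "\<not> starts j (snd (dec j s))"
    by auto
qed

lemma nrm_X: assumes "y \<in> carrier G" "validL L0" "\<not> starts j L0"
  shows "nrm j y L0 \<in> XS"
proof -
  have "validL ((j, rep y) # L0)" if "rep y \<noteq> \<one>"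
    using assms that rep_carrier rep_rep by (cases L0) (auto simp: validL_def starts_def)
  then show ?thesis using assms hp_H by (auto simp: nrm_def XS_def)
qed

lemma dec_nrm: assumes "y \<in> carrier G" "\<not> starts j L0"
  shows "dec j (nrm j y L0) = (y, L0)"
proof (cases "rep y = \<one>")
  case True
  then have "hp y = y" by (simp add: hp_def assms)
  then show ?thesis using True assms by (cases L0) (auto simp: dec_def nrm_def starts_def)
next
  case False
  then show ?thesis using hp_rep[OF assms(1)] by (simp add: dec_def nrm_def)
qed

lemma act_X: "g \<in> carrier G \<Longrightarrow> s \<in> XS \<Longrightarrow> act j g s \<in> XS"
  unfolding act_def using dec_props by (intro nrm_X) auto

lemma act_mult: assumes "g \<in> carrier G" "g' \<in> carrier G" "s \<in> XS"
  shows "act j g (act j g' s) = act j (g \<otimes> g') s"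
proof -
  have "dec j (act j g' s) = (g' \<otimes> fst (dec j s), snd (dec j s))"
    unfolding act_def using dec_props[OF assms(3)] assms by (intro dec_nrm) auto
  then show ?thesis using dec_props[OF assms(3)] assms by (simp add: act_def m_assoc)
qed

lemma act_H: assumes "h \<in> H" "s \<in> XS" shows "act j h s = (h \<otimes> fst s, snd s)"
proof -
  obtain h0 L where s: "s = (h0, L)" "h0 \<in> H" "validL L" using assms by (auto simp: XS_def)
  have hc: "h \<in> carrier G" "h0 \<in> carrier G" using assms s Hmem by auto
  have hh: "h \<otimes> h0 \<in> H" using assms s subgroup.m_closed[OF sgH] by blast
  show ?thesis
  proof (cases "starts j L")
    case True
    then obtain t L' where L: "L = (j,t) # L'" unfolding starts_def by (cases L) auto
    have t: "t \<in> carrier G" "rep t = t" "t \<noteq> \<one>" using s L by (auto simp: validL_def)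
    have e: "h \<otimes> (h0 \<otimes> t) = (h \<otimes> h0) \<otimes> t" using hc t by (simp add: m_assoc)
    have "rep (h \<otimes> (h0 \<otimes> t)) = t" using e rep_Hmult[OF hh t(1)] t by simp
    moreover have "hp (h \<otimes> (h0 \<otimes> t)) = h \<otimes> h0" using e hp_Hmult_rep[OF hh t(1) t(2)] by simp
    ultimately show ?thesis using s L t by (simp add: act_def dec_def nrm_def)
  next
    case False
    then have d: "dec j s = s" using s by (cases L) (auto simp: dec_def starts_def)
    have "rep (h \<otimes> h0) = \<one>" using hh by (simp add: rep_def)
    moreover have "hp (h \<otimes> h0) = h \<otimes> h0" using calculation hh Hmem by (simp add: hp_def)
    ultimately show ?thesis using s d by (simp add: act_def nrm_def)
  qed
qed

end
context amctx begin
definition interp where "interp w s = foldr (\<lambda>(j,g) s. act j g s) w s"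

lemma interp_Nil[simp]: "interp [] s = s" by (simp add: interp_def)
lemma interp_Cons[simp]: "interp ((j,g) # w) s = act j g (interp w s)" by (simp add: interp_def)
lemma interp_append: "interp (v @ w) s = interp v (interp w s)" by (simp add: interp_def)

lemma interp_X: "w \<in> lists (UNIV \<times> carrier G) \<Longrightarrow> s \<in> XS \<Longrightarrow> interp w s \<in> XS"
  by (induction w) (auto intro: act_X)

lemma rel_interp:
  assumes "amalg_rel G H v w" "v \<in> lists (UNIV \<times> carrier G)" "s \<in> XS"
  shows "interp v s = interp w s"
  using assms
proof (induction arbitrary: s)
  case (sym v w) then show ?case using arel_lists[OF sym.hyps HG is_monoid] by metis
next
  case (trans u v w) then show ?case using arel_lists[OF trans.hyps(1) HG is_monoid] by metis
next
  case (cong v w x y)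
  have "interp y s \<in> XS" using cong interp_X by auto
  then show ?case using cong by (simp add: interp_append)
next
  case (mult g g' j) then show ?case by (simp add: act_mult)
next
  case (one j)
  then show ?case using act_H[OF subgroup.one_closed[OF sgH], of s j] by (auto simp: XS_def Hmem)
next
  case (amalg h j k) then show ?case by (simp add: act_H)
qed auto

definition word_of :: "'a \<times> (nat \<times> 'a) list \<Rightarrow> (nat \<times> 'a) list" where
  "word_of s = (0, fst s) # snd s"

lemma word_of_dec: assumes "s \<in> XS"
  shows "amalg_rel G H (word_of s) ((j, fst (dec j s)) # snd (dec j s))"
proof -
  obtain h L where s: "s = (h, L)" "h \<in> H" "validL L" using assms by (auto simp: XS_def)
  have 1: "amalg_rel G H (word_of s) ((j, h) # L)"
    using arel_app_right[OF amalg_rel.amalg[OF s(2), where j=0 and k=j], where y=L] s by (simp add: word_of_def)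
  show ?thesis
  proof (cases "starts j L")
    case True
    then obtain t L' where L: "L = (j,t) # L'" unfolding starts_def by (cases L) auto
    have t: "t \<in> carrier G" using s L by (auto simp: validL_def)
    have "amalg_rel G H ((j, h) # L) ((j, h \<otimes> t) # L')"
      using arel_app_right[OF amalg_rel.mult[OF Hmem[OF s(2)] t, where H=H and j=j], where y=L'] L by simp
    then show ?thesis using 1 s L by (simp add: dec_def) (metis amalg_rel.trans)
  next
    case False
    then have d: "dec j s = s" using s by (cases L) (auto simp: dec_def starts_def)
    then show ?thesis using 1 s by simp
  qed
qed

lemma nrm_word: assumes "y \<in> carrier G"
  shows "amalg_rel G H ((j, y) # L0) (word_of (nrm j y L0))"
proof -
  have 1: "amalg_rel G H [(j, y)] [(j, hp y), (j, rep y)]"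
    using amalg_rel.mult[OF hp_carrier[OF assms] rep_carrier[OF assms], where H=H and j=j] hp_rep[OF assms]
    by (simp add: amalg_rel.sym)
  have 2: "amalg_rel G H [(j, hp y), (j, rep y)] [(0, hp y), (j, rep y)]"
    using arel_app_right[OF amalg_rel.amalg[OF hp_H[OF assms], where j=j and k=0], where y="[(j, rep y)]"] by simp
  have 3: "amalg_rel G H ((j, y) # L0) ((0, hp y) # (j, rep y) # L0)"
    using arel_app_right[OF amalg_rel.trans[OF 1 2], where y=L0] by simp
  show ?thesis
  proof (cases "rep y = \<one>")
    case True
    have "amalg_rel G H ((0, hp y) # (j, \<one>) # L0) ((0, hp y) # L0)"
      using amalg_rel.cong[OF amalg_rel.one[where G=G and H=H and j=j], where x="[(0, hp y)]" and y=L0] by simp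
    then show ?thesis using 3 True by (simp add: nrm_def word_of_def) (metis amalg_rel.trans)
  next
    case False then show ?thesis using 3 by (simp add: nrm_def word_of_def)
  qed
qed

lemma step_word: assumes "s \<in> XS" "g \<in> carrier G"
  shows "amalg_rel G H ((j, g) # word_of s) (word_of (act j g s))"
proof -
  have y: "fst (dec j s) \<in> carrier G" using dec_props[OF assms(1)] by auto
  have 1: "amalg_rel G H ((j, g) # word_of s) ((j, g) # (j, fst (dec j s)) # snd (dec j s))"
    using arel_Cons[OF word_of_dec[OF assms(1)]] .
  have 2: "amalg_rel G H ((j, g) # (j, fst (dec j s)) # snd (dec j s)) ((j, g \<otimes> fst (dec j s)) # snd (dec j s))"
    using arel_app_right[OF amalg_rel.mult[OF assms(2) y, where H=H and j=j], where y="snd (dec j s)"] by simp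
  have 3: "amalg_rel G H ((j, g \<otimes> fst (dec j s)) # snd (dec j s)) (word_of (act j g s))"
    unfolding act_def using nrm_word assms y by simp
  show ?thesis using 1 2 3 by (metis amalg_rel.trans)
qed

lemma XS_one: "(\<one>, []) \<in> XS"
  by (simp add: XS_def validL_def subgroup.one_closed[OF sgH])

lemma word_of_interp:
  assumes "w \<in> lists (UNIV \<times> carrier G)"
  shows "amalg_rel G H w (word_of (interp w (\<one>, [])))"
  using assms
proof (induction w)
  case Nil
  show ?case by (simp add: word_of_def) (rule amalg_rel.sym, rule amalg_rel.one)
next
  case (Cons a w)
  obtain j g where a: "a = (j,g)" by force
  have g: "g \<in> carrier G" and w: "w \<in> lists (UNIV \<times> carrier G)" using Cons a by auto
  have 1: "amalg_rel G H (a # w) ((j,g) # word_of (interp w (\<one>, [])))"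
    using arel_Cons[of G H w _ "(j,g)"] Cons.IH w a by simp
  have 2: "amalg_rel G H ((j,g) # word_of (interp w (\<one>, []))) (word_of (act j g (interp w (\<one>, []))))"
    using step_word[OF interp_X[OF w XS_one] g] .
  show ?case using 1 2 a by (simp) (metis amalg_rel.trans)
qed

end

definition reduced :: "('g, 'b) monoid_scheme \<Rightarrow> 'g set \<Rightarrow> (nat \<times> 'g) list \<Rightarrow> bool" where
  "reduced G H r \<longleftrightarrow> r \<in> lists (UNIV \<times> carrier G) \<and> alt r \<and> r \<noteq> [] \<and>
     ((\<forall>x\<in>set r. snd x \<notin> H) \<or> (\<exists>j g. r = [(j,g)] \<and> g \<noteq> \<one>\<^bsub>G\<^esub>))"

context amctx
begin

lemma notH_mult: assumes "g \<notin> H" "g \<in> carrier G" "h \<in> H" shows "g \<otimes> h \<notin> H" "h \<otimes> g \<notin> H"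
proof -
  have hc: "h \<in> carrier G" using assms Hmem by auto
  show "g \<otimes> h \<notin> H"
  proof
    assume "g \<otimes> h \<in> H"
    then have "(g \<otimes> h) \<otimes> inv h \<in> H" using assms subgroup.m_closed[OF sgH] subgroup.m_inv_closed[OF sgH] by blast
    then show False using assms hc by (simp add: m_assoc)
  qed
  show "h \<otimes> g \<notin> H"
  proof
    assume "h \<otimes> g \<in> H"
    then have "inv h \<otimes> (h \<otimes> g) \<in> H" using assms subgroup.m_closed[OF sgH] subgroup.m_inv_closed[OF sgH] by blast
    then show False using assms hc by (simp add: m_assoc[symmetric])
  qed
qed

lemma interp_reduced_starts:
  assumes "r \<in> lists (UNIV \<times> carrier G)" "alt r" "r \<noteq> []" "\<forall>x\<in>set r. snd x \<notin> H"
  shows "starts (fst (hd r)) (snd (interp r (\<one>, [])))"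
  using assms
proof (induction r rule: alt.induct)
  case 1 then show ?case by simp
next
  case (2 x)
  obtain j g where x: "x = (j,g)" by force
  have g: "g \<in> carrier G" "g \<notin> H" using 2 x by auto
  have "rep g \<noteq> \<one>" using rep_one_iff g by auto
  then show ?case using x g by (simp add: act_def dec_def nrm_def starts_def)
next
  case (3 x y r)
  obtain j g where x: "x = (j,g)" by force
  obtain k g' where y: "y = (k,g')" by force
  have g: "g \<in> carrier G" "g \<notin> H" "j \<noteq> k" using 3 x y by auto
  define s where "s = interp (y # r) (\<one>, [])"
  have sX: "s \<in> XS" unfolding s_def using 3 XS_one by (intro interp_X) auto
  have st: "starts k (snd s)" using 3 y unfolding s_def by auto
  obtain h0 L where s: "s = (h0, L)" "h0 \<in> H" using sX by (auto simp: XS_def)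
  then obtain t L' where L: "L = (k,t) # L'" using st by (cases L) (auto simp: starts_def)
  have d: "dec j s = s" using s L g by (simp add: dec_def)
  have "g \<otimes> h0 \<notin> H" using notH_mult g s by blast
  then have "rep (g \<otimes> h0) \<noteq> \<one>" using rep_one_iff g s Hmem by auto
  then show ?case using x d s by (simp add: s_def[symmetric] act_def nrm_def starts_def)
qed

lemma reduced_nontriv: assumes "reduced G H r" shows "\<not> amalg_rel G H r []"
proof
  assume rel: "amalg_rel G H r []"
  have rl: "r \<in> lists (UNIV \<times> carrier G)" using assms by (simp add: reduced_def)
  have e: "interp r (\<one>, []) = (\<one>, [])" using rel_interp[OF rel rl XS_one] by simp
  have c1: False if "\<forall>x\<in>set r. snd x \<notin> H"
    using interp_reduced_starts[OF rl _ _ that] assms e by (simp add: reduced_def starts_def)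
  show False
  proof (cases "\<forall>x\<in>set r. snd x \<notin> H")
    case True then show False using c1 by blast
  next
    case False
    then obtain j g where r: "r = [(j,g)]" "g \<noteq> \<one>" using assms by (auto simp: reduced_def)
    then have gH: "g \<in> H" using False by auto
    have "act j g (\<one>, []) = (g, [])" using act_H[OF gH XS_one] Hmem[OF gH] by simp
    then show False using e r by simp
  qed
qed

lemma reduce:
  assumes "w \<in> lists (UNIV \<times> carrier G)"
  shows "amalg_rel G H w [] \<or> (\<exists>r. reduced G H r \<and> amalg_rel G H w r)"
proof -
  define s where "s = interp w (\<one>, [])"
  have sX: "s \<in> XS" unfolding s_def using interp_X[OF assms XS_one] .
  obtain h L where s: "s = (h, L)" "h \<in> H" "validL L" using sX by (auto simp: XS_def)
  have hc: "h \<in> carrier G" using s Hmem by auto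
  have w1: "amalg_rel G H w ((0, h) # L)" using word_of_interp[OF assms] s by (simp add: s_def word_of_def)
  show ?thesis
  proof (cases L)
    case Nil
    show ?thesis
    proof (cases "h = \<one>")
      case True
      then show ?thesis using w1 Nil amalg_rel.one[where G=G and H=H and j=0] by (metis amalg_rel.trans)
    next
      case False
      then have "reduced G H [(0,h)]" using hc by (simp add: reduced_def)
      then show ?thesis using w1 Nil by blast
    qed
  next
    case (Cons a L')
    obtain j t where a: "a = (j,t)" by force
    have t: "t \<in> carrier G" "rep t = t" "t \<noteq> \<one>" using s Cons a by (auto simp: validL_def)
    have tH: "t \<notin> H" using rep_one_iff[OF t(1)] t(2,3) by simp
    have 1: "amalg_rel G H ((0, h) # L) ((j, h) # L)"
      using arel_app_right[OF amalg_rel.amalg[OF s(2), where j=0 and k=j], where y=L] by simp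
    have 2: "amalg_rel G H ((j, h) # L) ((j, h \<otimes> t) # L')"
      using arel_app_right[OF amalg_rel.mult[OF hc t(1), where H=H and j=j], where y=L'] Cons a by simp
    have red: "reduced G H ((j, h \<otimes> t) # L')"
    proof -
      have "alt ((j, h \<otimes> t) # L')" using s Cons a by (cases L') (auto simp: validL_def)
      moreover have "\<forall>x\<in>set L'. snd x \<in> carrier G \<and> snd x \<notin> H"
      proof
        fix x assume x: "x \<in> set L'"
        then have "snd x \<in> carrier G" "rep (snd x) = snd x" "snd x \<noteq> \<one>"
          using s Cons by (auto simp: validL_def)
        then show "snd x \<in> carrier G \<and> snd x \<notin> H" using rep_one_iff[of "snd x"] by auto
      qed
      moreover have "h \<otimes> t \<notin> H" using notH_mult(2)[OF tH t(1) s(2)] .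
      ultimately show ?thesis using hc t by (auto simp: reduced_def)
    qed
    show ?thesis using red 1 2 w1 by (metis amalg_rel.trans)
  qed
qed

end

lemma fu_props:
  assumes "free_ultrafilter U"
  shows "UNIV \<in> U" "{} \<notin> U" "\<And>A B. A \<in> U \<Longrightarrow> A \<subseteq> B \<Longrightarrow> B \<in> U"
    "\<And>A B. A \<in> U \<Longrightarrow> B \<in> U \<Longrightarrow> A \<inter> B \<in> U" "\<And>A. A \<notin> U \<Longrightarrow> - A \<in> U"
  using assms unfolding free_ultrafilter_def by blast+

lemma fu_fin_inter:
  assumes "free_ultrafilter U" "finite S" "\<forall>x\<in>S. {i. P x i} \<in> U"
  shows "{i. \<forall>x\<in>S. P x i} \<in> U"
  using assms(2,3)
proof (induction S rule: finite_induct)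
  case empty then show ?case using fu_props[OF assms(1)] by simp
next
  case (insert a F)
  have "{i. P a i} \<inter> {i. \<forall>x\<in>F. P x i} \<in> U" using insert fu_props(4)[OF assms(1)] by simp
  moreover have "{i. P a i} \<inter> {i. \<forall>x\<in>F. P x i} = {i. \<forall>x\<in>insert a F. P x i}" by auto
  ultimately show ?case by simp
qed

locale ultra =
  fixes G :: "nat \<Rightarrow> ('g, 'b) monoid_scheme" and U :: "nat set set"
  assumes grp: "\<And>i. group (G i)" and fu: "free_ultrafilter U"
begin

abbreviation "P \<equiv> product_group UNIV G"
abbreviation "N \<equiv> ultra_null G U"

lemma U_UNIV: "UNIV \<in> U" using fu_props[OF fu] by blast
lemma U_mono: "A \<in> U \<Longrightarrow> A \<subseteq> B \<Longrightarrow> B \<in> U" using fu_props[OF fu] by blast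
lemma U_int: "A \<in> U \<Longrightarrow> B \<in> U \<Longrightarrow> A \<inter> B \<in> U" using fu_props[OF fu] by blast
lemma U_compl: "A \<notin> U \<Longrightarrow> - A \<in> U" using fu_props[OF fu] by blast
lemma U_ne: "A \<in> U \<Longrightarrow> \<exists>i. i \<in> A" using fu_props[OF fu] by (metis ex_in_conv)

lemma P_group: "group P" using grp by simp
lemma P_carrier: "f \<in> carrier P \<longleftrightarrow> (\<forall>i. f i \<in> carrier (G i))"
  by (simp add: PiE_UNIV_domain Pi_iff)
lemma P_mult: "f \<otimes>\<^bsub>P\<^esub> g = (\<lambda>i. f i \<otimes>\<^bsub>G i\<^esub> g i)"
  by (simp add: restrict_UNIV)
lemma P_one: "\<one>\<^bsub>P\<^esub> = (\<lambda>i. \<one>\<^bsub>G i\<^esub>)"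
  by (simp add: restrict_UNIV)
lemma P_inv: "f \<in> carrier P \<Longrightarrow> inv\<^bsub>P\<^esub> f = (\<lambda>i. inv\<^bsub>G i\<^esub> f i)"
  using inv_product_group[of f UNIV G] grp by (simp add: restrict_UNIV)

lemma N_mem: "f \<in> N \<longleftrightarrow> (\<forall>i. f i \<in> carrier (G i)) \<and> {i. f i = \<one>\<^bsub>G i\<^esub>} \<in> U"
  unfolding ultra_null_def P_carrier by simp

lemma N_normal: "N \<lhd> P"
proof -
  have sg: "subgroup N P"
  proof (rule group.subgroupI[OF P_group])
    show "N \<subseteq> carrier P" unfolding ultra_null_def by blast
    have "\<one>\<^bsub>P\<^esub> \<in> N" unfolding N_mem P_one using U_UNIV grp group.is_monoid monoid.one_closed by auto
    then show "N \<noteq> {}" by blast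
  next
    fix a assume a: "a \<in> N"
    then have ac: "a \<in> carrier P" unfolding ultra_null_def by blast
    have "{i. a i = \<one>\<^bsub>G i\<^esub>} \<subseteq> {i. inv\<^bsub>G i\<^esub> a i = \<one>\<^bsub>G i\<^esub>}"
      using grp by (auto simp: group.is_monoid monoid.inv_one)
    then show "inv\<^bsub>P\<^esub> a \<in> N" using a ac U_mono unfolding N_mem P_inv[OF ac]
      using grp group.inv_closed by (metis (no_types, lifting))
  next
    fix a b assume a: "a \<in> N" and b: "b \<in> N"
    have "{i. a i = \<one>\<^bsub>G i\<^esub>} \<inter> {i. b i = \<one>\<^bsub>G i\<^esub>} \<subseteq> {i. a i \<otimes>\<^bsub>G i\<^esub> b i = \<one>\<^bsub>G i\<^esub>}"
      using grp a b N_mem by (auto simp: group.is_monoid monoid.l_one)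
    then show "a \<otimes>\<^bsub>P\<^esub> b \<in> N" using a b U_int U_mono unfolding N_mem P_mult
      using grp group.is_monoid monoid.m_closed by (metis (no_types, lifting))
  qed
  show ?thesis
    unfolding group.normal_inv_iff[OF P_group]
  proof (intro conjI ballI sg)
    fix x h assume x: "x \<in> carrier P" and h: "h \<in> N"
    have xc: "\<And>i. x i \<in> carrier (G i)" using x P_carrier by blast
    have hc: "\<And>i. h i \<in> carrier (G i)" using h N_mem by blast
    have "{i. h i = \<one>\<^bsub>G i\<^esub>} \<subseteq> {i. x i \<otimes>\<^bsub>G i\<^esub> h i \<otimes>\<^bsub>G i\<^esub> inv\<^bsub>G i\<^esub> x i = \<one>\<^bsub>G i\<^esub>}"
      using xc grp by (auto simp: group.r_inv group.is_monoid monoid.r_one)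
    moreover have "{i. h i = \<one>\<^bsub>G i\<^esub>} \<in> U" using h N_mem by blast
    ultimately show "x \<otimes>\<^bsub>P\<^esub> h \<otimes>\<^bsub>P\<^esub> inv\<^bsub>P\<^esub> x \<in> N"
      unfolding N_mem P_mult P_inv[OF x] using U_mono xc hc grp
      by (simp add: group.inv_closed group.is_monoid monoid.m_closed)
  qed
qed

lemma N_sub: "subgroup N P" using N_normal normal_imp_subgroup by blast

lemma UP_group: "group (ultraprod G U)"
  unfolding ultraprod_def using normal.factorgroup_is_group[OF N_normal] .

lemma UP_carrier: "carrier (ultraprod G U) = ultra_class G U ` carrier P"
  unfolding ultraprod_def ultra_class_def carrier_FactGroup by simp

lemma class_carrier: "f \<in> carrier P \<Longrightarrow> ultra_class G U f \<in> carrier (ultraprod G U)"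
  unfolding UP_carrier by blast

lemma UP_mult: "f \<in> carrier P \<Longrightarrow> g \<in> carrier P \<Longrightarrow>
   ultra_class G U f \<otimes>\<^bsub>ultraprod G U\<^esub> ultra_class G U g = ultra_class G U (\<lambda>i. f i \<otimes>\<^bsub>G i\<^esub> g i)"
proof -
  assume f: "f \<in> carrier P" and g: "g \<in> carrier P"
  have "(N #>\<^bsub>P\<^esub> f) <#>\<^bsub>P\<^esub> (N #>\<^bsub>P\<^esub> g) = N #>\<^bsub>P\<^esub> (f \<otimes>\<^bsub>P\<^esub> g)"
    by (rule normal.rcos_sum[OF N_normal f g])
  then show ?thesis by (simp add: ultraprod_def ultra_class_def restrict_UNIV)
qed

lemma UP_one: "\<one>\<^bsub>ultraprod G U\<^esub> = ultra_class G U (\<lambda>i. \<one>\<^bsub>G i\<^esub>)"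
proof -
  have "N \<subseteq> carrier P" using N_sub subgroup.subset by blast
  then show ?thesis
    unfolding ultraprod_def ultra_class_def one_FactGroup P_one[symmetric]
    using group.coset_mult_one[OF P_group] by simp
qed

lemma class_eq_imp:
  assumes f: "f \<in> carrier P" and g: "g \<in> carrier P" and e: "ultra_class G U f = ultra_class G U g"
  shows "{i. f i = g i} \<in> U"
proof -
  have "f \<in> N #>\<^bsub>P\<^esub> g" using group.rcos_self[OF P_group f N_sub] e unfolding ultra_class_def by simp
  then have "f \<otimes>\<^bsub>P\<^esub> inv\<^bsub>P\<^esub> g \<in> N" using subgroup.rcos_module_imp[OF N_sub P_group g] by blast
  then have 1: "{i. f i \<otimes>\<^bsub>G i\<^esub> inv\<^bsub>G i\<^esub> g i = \<one>\<^bsub>G i\<^esub>} \<in> U"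
    unfolding N_mem P_mult P_inv[OF g] by simp
  have "{i. f i \<otimes>\<^bsub>G i\<^esub> inv\<^bsub>G i\<^esub> g i = \<one>\<^bsub>G i\<^esub>} \<subseteq> {i. f i = g i}"
  proof
    fix i assume "i \<in> {i. f i \<otimes>\<^bsub>G i\<^esub> inv\<^bsub>G i\<^esub> g i = \<one>\<^bsub>G i\<^esub>}"
    then have "f i \<otimes>\<^bsub>G i\<^esub> inv\<^bsub>G i\<^esub> g i = \<one>\<^bsub>G i\<^esub>" by simp
    moreover have fi: "f i \<in> carrier (G i)" and gi: "g i \<in> carrier (G i)" using f g P_carrier by auto
    ultimately have "inv\<^bsub>G i\<^esub> (inv\<^bsub>G i\<^esub> g i) = f i"
      using group.inv_equality[OF grp[of i]] group.inv_closed[OF grp[of i] gi] by blast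
    then show "i \<in> {i. f i = g i}" using group.inv_inv[OF grp[of i] gi] by simp
  qed
  then show ?thesis using 1 U_mono by blast
qed

lemma class_eqI:
  assumes f: "f \<in> carrier P" and g: "g \<in> carrier P" and e: "{i. f i = g i} \<in> U"
  shows "ultra_class G U f = ultra_class G U g"
proof -
  have fc: "\<And>i. f i \<in> carrier (G i)" and gc: "\<And>i. g i \<in> carrier (G i)" using f g P_carrier by auto
  have "{i. f i = g i} \<subseteq> {i. f i \<otimes>\<^bsub>G i\<^esub> inv\<^bsub>G i\<^esub> g i = \<one>\<^bsub>G i\<^esub>}"
    using gc grp by (auto simp: group.r_inv)
  then have "f \<otimes>\<^bsub>P\<^esub> inv\<^bsub>P\<^esub> g \<in> N"
    unfolding N_mem P_mult P_inv[OF g] using e U_mono fc gc grp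
    by (simp add: group.inv_closed group.is_monoid monoid.m_closed)
  then have "f \<in> N #>\<^bsub>P\<^esub> g" using subgroup.rcos_module_rev[OF N_sub P_group g f] by blast
  then have "N #>\<^bsub>P\<^esub> g = N #>\<^bsub>P\<^esub> f" using group.repr_independence[OF P_group _ g N_sub] by blast
  then show ?thesis unfolding ultra_class_def by simp
qed

definition rp where "rp x = (SOME f. f \<in> carrier P \<and> x = ultra_class G U f)"

lemma rp: assumes "x \<in> carrier (ultraprod G U)"
  shows "rp x \<in> carrier P" "x = ultra_class G U (rp x)"
proof -
  have "\<exists>f. f \<in> carrier P \<and> x = ultra_class G U f" using assms UP_carrier by blast
  then have "rp x \<in> carrier P \<and> x = ultra_class G U (rp x)" unfolding rp_def by (rule someI_ex)
  then show "rp x \<in> carrier P" "x = ultra_class G U (rp x)" by auto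
qed

lemma rp_i: "x \<in> carrier (ultraprod G U) \<Longrightarrow> rp x i \<in> carrier (G i)"
  using rp(1) P_carrier by blast

lemma rp_class: assumes "f \<in> carrier P" shows "{i. rp (ultra_class G U f) i = f i} \<in> U"
proof -
  have c: "ultra_class G U f \<in> carrier (ultraprod G U)" using class_carrier[OF assms] .
  show ?thesis using class_eq_imp[OF rp(1)[OF c] assms] rp(2)[OF c] by simp
qed

end


locale mainctx =
  fixes G :: "nat \<Rightarrow> 'g monoid" and H :: "nat \<Rightarrow> 'g set" and U :: "nat set set"
  assumes grp: "\<And>i. group (G i)" and sg: "\<And>i. subgroup (H i) (G i)" and fu: "free_ultrafilter U"

sublocale mainctx \<subseteq> UG: ultra G U
  by (simp add: ultra_def grp fu)

sublocale mainctx \<subseteq> UA: ultra "\<lambda>i. amalg_free_product (G i) (H i)" U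
  by (simp add: ultra_def amalg_group grp sg fu)

context mainctx
begin

abbreviation "GU \<equiv> ultraprod G U"
abbreviation "HU \<equiv> ultraprod_sub G H U"
abbreviation "AG \<equiv> (\<lambda>i. amalg_free_product (G i) (H i))"

lemma amctx_i: "amctx (G i) (H i)"
  using grp sg by (simp add: amctx_def amctx_axioms_def)

lemma Hc: "\<forall>i. f i \<in> H i \<Longrightarrow> f \<in> carrier UG.P"
  unfolding UG.P_carrier using sg subgroup.subset by blast

lemma HU_sub: "subgroup HU GU"
proof (rule group.subgroupI[OF UG.UP_group])
  show "HU \<subseteq> carrier GU"
  proof
    fix x assume "x \<in> HU"
    then obtain f where "x = ultra_class G U f" "\<forall>i. f i \<in> H i" unfolding ultraprod_sub_def by blast
    then show "x \<in> carrier GU" using Hc UG.class_carrier by simp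
  qed
  have "\<forall>i. \<one>\<^bsub>G i\<^esub> \<in> H i" using subgroup.one_closed[OF sg] by simp
  then have "ultra_class G U (\<lambda>i. \<one>\<^bsub>G i\<^esub>) \<in> HU" unfolding ultraprod_sub_def by blast
  then show "HU \<noteq> {}" by blast
next
  fix a assume "a \<in> HU"
  then obtain f where f: "a = ultra_class G U f" "\<forall>i. f i \<in> H i" unfolding ultraprod_sub_def by blast
  have fc: "f \<in> carrier UG.P" using Hc f(2) .
  define g where "g = (\<lambda>i. inv\<^bsub>G i\<^esub> f i)"
  have gH: "\<forall>i. g i \<in> H i" unfolding g_def using f(2) subgroup.m_inv_closed[OF sg] by simp
  have gc: "g \<in> carrier UG.P" using Hc gH .
  have fci: "\<And>i. f i \<in> carrier (G i)" using fc UG.P_carrier by blast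
  have "(\<lambda>i. g i \<otimes>\<^bsub>G i\<^esub> f i) = (\<lambda>i. \<one>\<^bsub>G i\<^esub>)"
    unfolding g_def using fci grp by (simp add: group.l_inv)
  then have e: "ultra_class G U g \<otimes>\<^bsub>GU\<^esub> a = \<one>\<^bsub>GU\<^esub>"
    using UG.UP_mult[OF gc fc] f(1) UG.UP_one by simp
  have "inv\<^bsub>GU\<^esub> a = ultra_class G U g"
    by (rule group.inv_equality[OF UG.UP_group e]) (use UG.class_carrier gc fc f(1) in auto)
  then show "inv\<^bsub>GU\<^esub> a \<in> HU" using gH unfolding ultraprod_sub_def by blast
next
  fix a b assume "a \<in> HU" "b \<in> HU"
  then obtain f g where f: "a = ultra_class G U f" "\<forall>i. f i \<in> H i"
    and g: "b = ultra_class G U g" "\<forall>i. g i \<in> H i" unfolding ultraprod_sub_def by blast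
  have fc: "f \<in> carrier UG.P" using Hc f(2) .
  have gc: "g \<in> carrier UG.P" using Hc g(2) .
  have "\<forall>i. f i \<otimes>\<^bsub>G i\<^esub> g i \<in> H i" using f(2) g(2) subgroup.m_closed[OF sg] by simp
  then have "ultra_class G U (\<lambda>i. f i \<otimes>\<^bsub>G i\<^esub> g i) \<in> HU" unfolding ultraprod_sub_def by blast
  then show "a \<otimes>\<^bsub>GU\<^esub> b \<in> HU" using UG.UP_mult[OF fc gc] f(1) g(1) by simp
qed

lemma amctx_U: "amctx GU HU"
  using UG.UP_group HU_sub by (simp add: amctx_def amctx_axioms_def)

definition comp :: "nat \<Rightarrow> (nat \<times> (nat \<Rightarrow> 'g) set) list \<Rightarrow> (nat \<times> 'g) list" where
  "comp i w = map (\<lambda>(j,x). (j, UG.rp x i)) w"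

lemma comp_lists: "w \<in> lists (UNIV \<times> carrier GU) \<Longrightarrow> comp i w \<in> lists (UNIV \<times> carrier (G i))"
  unfolding comp_def by (induction w) (auto intro: UG.rp_i)

lemma W:
  assumes "amalg_rel GU HU v w"
  shows "{i. amalg_rel (G i) (H i) (comp i v) (comp i w)} \<in> U"
  using assms
proof induction
  case (refl w)
  show ?case using UG.U_UNIV by (simp add: amalg_rel.refl)
next
  case (sym v w)
  then show ?case using amalg_rel.sym UG.U_mono[OF sym.IH] by (metis (mono_tags, lifting) mem_Collect_eq subsetI)
next
  case (trans u v w)
  have "{i. amalg_rel (G i) (H i) (comp i u) (comp i v)} \<inter> {i. amalg_rel (G i) (H i) (comp i v) (comp i w)}
        \<subseteq> {i. amalg_rel (G i) (H i) (comp i u) (comp i w)}"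
    using amalg_rel.trans by blast
  then show ?case using UG.U_int[OF trans.IH] UG.U_mono by blast
next
  case (cong v w x y)
  have "{i. amalg_rel (G i) (H i) (comp i v) (comp i w)} \<subseteq> {i. amalg_rel (G i) (H i) (comp i (x @ v @ y)) (comp i (x @ w @ y))}"
    unfolding comp_def using amalg_rel.cong by fastforce
  then show ?case using UG.U_mono[OF cong.IH] by blast
next
  case (mult g g' j)
  define f where "f = UG.rp g"
  define f' where "f' = UG.rp g'"
  have fc: "f \<in> carrier UG.P" "f' \<in> carrier UG.P" using UG.rp mult f_def f'_def by auto
  have ff: "(\<lambda>i. f i \<otimes>\<^bsub>G i\<^esub> f' i) \<in> carrier UG.P"
    using fc grp UG.P_carrier group.is_monoid monoid.m_closed by (metis (no_types, lifting))
  have e: "g \<otimes>\<^bsub>GU\<^esub> g' = ultra_class G U (\<lambda>i. f i \<otimes>\<^bsub>G i\<^esub> f' i)"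
    using UG.UP_mult[OF fc] UG.rp(2) mult f_def f'_def by metis
  have "{i. UG.rp (g \<otimes>\<^bsub>GU\<^esub> g') i = f i \<otimes>\<^bsub>G i\<^esub> f' i} \<subseteq>
        {i. amalg_rel (G i) (H i) (comp i [(j, g), (j, g')]) (comp i [(j, g \<otimes>\<^bsub>GU\<^esub> g')])}"
  proof
    fix i assume "i \<in> {i. UG.rp (g \<otimes>\<^bsub>GU\<^esub> g') i = f i \<otimes>\<^bsub>G i\<^esub> f' i}"
    moreover have "f i \<in> carrier (G i)" "f' i \<in> carrier (G i)" using fc UG.P_carrier by auto
    ultimately show "i \<in> {i. amalg_rel (G i) (H i) (comp i [(j, g), (j, g')]) (comp i [(j, g \<otimes>\<^bsub>GU\<^esub> g')])}"
      using amalg_rel.mult[of "f i" "G i" "f' i" "H i" j] unfolding comp_def f_def f'_def by simp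
  qed
  then show ?case using UG.rp_class[OF ff] e UG.U_mono by simp
next
  case (one j)
  have oc: "(\<lambda>i. \<one>\<^bsub>G i\<^esub>) \<in> carrier UG.P" using grp UG.P_carrier group.is_monoid monoid.one_closed by blast
  have "{i. UG.rp (\<one>\<^bsub>GU\<^esub>) i = \<one>\<^bsub>G i\<^esub>} \<subseteq> {i. amalg_rel (G i) (H i) (comp i [(j, \<one>\<^bsub>GU\<^esub>)]) (comp i [])}"
    unfolding comp_def using amalg_rel.one by fastforce
  then show ?case using UG.rp_class[OF oc] UG.UP_one UG.U_mono by simp
next
  case (amalg h j k)
  then obtain f where f: "h = ultra_class G U f" "\<forall>i. f i \<in> H i" unfolding ultraprod_sub_def by blast
  have fc: "f \<in> carrier UG.P" using f sg subgroup.subset UG.P_carrier by blast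
  have "{i. UG.rp h i = f i} \<subseteq> {i. amalg_rel (G i) (H i) (comp i [(j, h)]) (comp i [(k, h)])}"
    unfolding comp_def using amalg_rel.amalg f by fastforce
  then show ?case using UG.rp_class[OF fc] f UG.U_mono by simp
qed

end

context mainctx
begin

lemma comp_append: "comp i (v @ w) = comp i v @ comp i w" by (simp add: comp_def)

definition Phi where
  "Phi A = ultra_class AG U (\<lambda>i. amalg_class (G i) (H i) (comp i (SOME w. w \<in> A)))"

lemma FA: "w \<in> lists (UNIV \<times> carrier GU) \<Longrightarrow> (\<lambda>i. amalg_class (G i) (H i) (comp i w)) \<in> carrier UA.P"
  unfolding UA.P_carrier using comp_lists amalg_carrierI by blast

lemma Phi_eq:
  assumes w: "w \<in> lists (UNIV \<times> carrier GU)"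
  shows "Phi (amalg_class GU HU w) = ultra_class AG U (\<lambda>i. amalg_class (G i) (H i) (comp i w))"
proof -
  define a where "a = (SOME a. a \<in> amalg_class GU HU w)"
  have r: "amalg_rel GU HU w a" unfolding a_def by (rule amalg_class_some)
  have al: "a \<in> lists (UNIV \<times> carrier GU)"
    using arel_lists[OF r amctx.HG[OF amctx_U] group.is_monoid[OF UG.UP_group]] w by simp
  have "{i. amalg_rel (G i) (H i) (comp i w) (comp i a)} \<subseteq>
        {i. amalg_class (G i) (H i) (comp i a) = amalg_class (G i) (H i) (comp i w)}"
    using amalg_class_eq amalg_rel.sym by blast
  then have "{i. amalg_class (G i) (H i) (comp i a) = amalg_class (G i) (H i) (comp i w)} \<in> U"
    using W[OF r] UG.U_mono by blast
  then show ?thesis unfolding Phi_def a_def[symmetric]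
    using UA.class_eqI[OF FA[OF al] FA[OF w]] by simp
qed

lemma Phi_hom: "Phi \<in> hom (amalg_free_product GU HU) (ultraprod AG U)"
proof (rule homI)
  fix x assume "x \<in> carrier (amalg_free_product GU HU)"
  then obtain w where w: "w \<in> lists (UNIV \<times> carrier GU)" "x = amalg_class GU HU w"
    by (rule amalg_carrierE)
  show "Phi x \<in> carrier (ultraprod AG U)" using Phi_eq[OF w(1)] w(2) UA.class_carrier[OF FA[OF w(1)]] by simp
next
  fix x y assume x: "x \<in> carrier (amalg_free_product GU HU)" and y: "y \<in> carrier (amalg_free_product GU HU)"
  obtain v where v: "v \<in> lists (UNIV \<times> carrier GU)" "x = amalg_class GU HU v"
    using x by (rule amalg_carrierE)
  obtain w where w: "w \<in> lists (UNIV \<times> carrier GU)" "y = amalg_class GU HU w"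
    using y by (rule amalg_carrierE)
  have vw: "v @ w \<in> lists (UNIV \<times> carrier GU)" using v w by simp
  have "Phi (x \<otimes>\<^bsub>amalg_free_product GU HU\<^esub> y) = ultra_class AG U (\<lambda>i. amalg_class (G i) (H i) (comp i v @ comp i w))"
    using Phi_eq[OF vw] v w by (simp add: amalg_mult comp_append)
  also have "\<dots> = ultra_class AG U (\<lambda>i. amalg_class (G i) (H i) (comp i v) \<otimes>\<^bsub>AG i\<^esub> amalg_class (G i) (H i) (comp i w))"
    by (simp add: amalg_mult)
  also have "\<dots> = Phi x \<otimes>\<^bsub>ultraprod AG U\<^esub> Phi y"
    using UA.UP_mult[OF FA[OF v(1)] FA[OF w(1)]] Phi_eq[OF v(1)] Phi_eq[OF w(1)] v(2) w(2) by simp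
  finally show "Phi (x \<otimes>\<^bsub>amalg_free_product GU HU\<^esub> y) = Phi x \<otimes>\<^bsub>ultraprod AG U\<^esub> Phi y" .
qed

lemma Phi_incl:
  assumes f: "\<forall>i. f i \<in> carrier (G i)"
  shows "Phi (amalg_incl GU HU j (ultra_class G U f)) = ultra_class AG U (\<lambda>i. amalg_incl (G i) (H i) j (f i))"
proof -
  have fc: "f \<in> carrier UG.P" using f UG.P_carrier by blast
  have l: "[(j, ultra_class G U f)] \<in> lists (UNIV \<times> carrier GU)" using UG.class_carrier[OF fc] by simp
  have "{i. UG.rp (ultra_class G U f) i = f i} \<subseteq>
        {i. amalg_class (G i) (H i) (comp i [(j, ultra_class G U f)]) = amalg_incl (G i) (H i) j (f i)}"
    by (auto simp: comp_def amalg_incl_def)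
  then have "{i. amalg_class (G i) (H i) (comp i [(j, ultra_class G U f)]) = amalg_incl (G i) (H i) j (f i)} \<in> U"
    using UG.rp_class[OF fc] UG.U_mono by blast
  moreover have "(\<lambda>i. amalg_incl (G i) (H i) j (f i)) \<in> carrier UA.P"
    unfolding UA.P_carrier amalg_incl_def using f by (auto intro: amalg_carrierI)
  ultimately show ?thesis
    unfolding amalg_incl_def[of GU] using Phi_eq[OF l] UA.class_eqI[OF FA[OF l]] by simp
qed

lemma K:
  assumes w: "w \<in> lists (UNIV \<times> carrier GU)"
    and tr: "{i. amalg_rel (G i) (H i) (comp i w) []} \<in> U"
  shows "amalg_rel GU HU w []"
proof (rule ccontr)
  assume nt: "\<not> amalg_rel GU HU w []"
  then obtain r where r: "reduced GU HU r" "amalg_rel GU HU w r"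
    using amctx.reduce[OF amctx_U w] by blast
  have rl: "r \<in> lists (UNIV \<times> carrier GU)" "alt r" "r \<noteq> []" using r(1) by (auto simp: reduced_def)
  have A1: "{i. amalg_rel (G i) (H i) (comp i r) []} \<in> U"
  proof -
    have "{i. amalg_rel (G i) (H i) (comp i w) (comp i r)} \<inter> {i. amalg_rel (G i) (H i) (comp i w) []}
      \<subseteq> {i. amalg_rel (G i) (H i) (comp i r) []}"
      using amalg_rel.trans amalg_rel.sym by blast
    then show ?thesis using UG.U_int[OF W[OF r(2)] tr] UG.U_mono by blast
  qed
  have base: "comp i r \<in> lists (UNIV \<times> carrier (G i)) \<and> alt (comp i r) \<and> comp i r \<noteq> []" for i
    using comp_lists[OF rl(1)] rl alt_map[of "\<lambda>j x. UG.rp x i" r] by (simp add: comp_def)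
  have A2: "{i. reduced (G i) (H i) (comp i r)} \<in> U"
  proof (cases "\<forall>x\<in>set r. snd x \<notin> HU")
    case True
    have "\<forall>x\<in>set r. {i. UG.rp (snd x) i \<notin> H i} \<in> U"
    proof
      fix x assume x: "x \<in> set r"
      have xc: "snd x \<in> carrier GU" using x rl(1) by auto
      have xn: "snd x \<notin> HU" using True x by blast
      show "{i. UG.rp (snd x) i \<notin> H i} \<in> U"
      proof (rule ccontr)
        assume "{i. UG.rp (snd x) i \<notin> H i} \<notin> U"
        then have "- {i. UG.rp (snd x) i \<notin> H i} \<in> U" by (rule UG.U_compl)
        moreover have "- {i. UG.rp (snd x) i \<notin> H i} = {i. UG.rp (snd x) i \<in> H i}" by auto
        ultimately have inU: "{i. UG.rp (snd x) i \<in> H i} \<in> U" by simp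
        define f where "f i = (if UG.rp (snd x) i \<in> H i then UG.rp (snd x) i else \<one>\<^bsub>G i\<^esub>)" for i
        have fH: "\<forall>i. f i \<in> H i" unfolding f_def using subgroup.one_closed[OF sg] by simp
        have "{i. UG.rp (snd x) i \<in> H i} \<subseteq> {i. f i = UG.rp (snd x) i}" unfolding f_def by auto
        then have "ultra_class G U f = ultra_class G U (UG.rp (snd x))"
          using UG.class_eqI[OF Hc[OF fH] UG.rp(1)[OF xc]] UG.U_mono[OF inU] by blast
        then have "snd x = ultra_class G U f" using UG.rp(2)[OF xc] by simp
        then have "snd x \<in> HU" using fH unfolding ultraprod_sub_def by blast
        then show False using xn by blast
      qed
    qed
    then have "{i. \<forall>x\<in>set r. UG.rp (snd x) i \<notin> H i} \<in> U"
      using fu_fin_inter[OF fu, of "set r" "\<lambda>x i. UG.rp (snd x) i \<notin> H i"] by simp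
    moreover have "{i. \<forall>x\<in>set r. UG.rp (snd x) i \<notin> H i} \<subseteq> {i. reduced (G i) (H i) (comp i r)}"
    proof
      fix i assume "i \<in> {i. \<forall>x\<in>set r. UG.rp (snd x) i \<notin> H i}"
      then have "\<forall>x\<in>set r. UG.rp (snd x) i \<notin> H i" by simp
      then have "\<forall>y\<in>set (comp i r). snd y \<notin> H i" unfolding comp_def by auto
      then show "i \<in> {i. reduced (G i) (H i) (comp i r)}" using base[of i] unfolding reduced_def by simp
    qed
    ultimately show ?thesis using UG.U_mono by blast
  next
    case False
    then obtain j g where jg: "r = [(j,g)]" "g \<noteq> \<one>\<^bsub>GU\<^esub>" using r(1) unfolding reduced_def by blast
    have gc: "g \<in> carrier GU" using rl(1) jg by simp
    have "{i. UG.rp g i \<noteq> \<one>\<^bsub>G i\<^esub>} \<in> U"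
    proof (rule ccontr)
      assume "{i. UG.rp g i \<noteq> \<one>\<^bsub>G i\<^esub>} \<notin> U"
      then have "- {i. UG.rp g i \<noteq> \<one>\<^bsub>G i\<^esub>} \<in> U" by (rule UG.U_compl)
      moreover have "- {i. UG.rp g i \<noteq> \<one>\<^bsub>G i\<^esub>} = {i. UG.rp g i = \<one>\<^bsub>G i\<^esub>}" by auto
      ultimately have inU: "{i. UG.rp g i = \<one>\<^bsub>G i\<^esub>} \<in> U" by simp
      have oc: "(\<lambda>i. \<one>\<^bsub>G i\<^esub>) \<in> carrier UG.P" using grp UG.P_carrier group.is_monoid monoid.one_closed by blast
      have "ultra_class G U (UG.rp g) = ultra_class G U (\<lambda>i. \<one>\<^bsub>G i\<^esub>)"
        using UG.class_eqI[OF UG.rp(1)[OF gc] oc] inU by simp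
      then have "g = \<one>\<^bsub>GU\<^esub>" using UG.rp(2)[OF gc] UG.UP_one by simp
      then show False using jg by simp
    qed
    moreover have "{i. UG.rp g i \<noteq> \<one>\<^bsub>G i\<^esub>} \<subseteq> {i. reduced (G i) (H i) (comp i r)}"
    proof
      fix i assume "i \<in> {i. UG.rp g i \<noteq> \<one>\<^bsub>G i\<^esub>}"
      then have "comp i r = [(j, UG.rp g i)] \<and> UG.rp g i \<noteq> \<one>\<^bsub>G i\<^esub>" using jg by (simp add: comp_def)
      then show "i \<in> {i. reduced (G i) (H i) (comp i r)}" using base[of i] unfolding reduced_def by blast
    qed
    ultimately show ?thesis using UG.U_mono by blast
  qed
  obtain i where "i \<in> {i. reduced (G i) (H i) (comp i r)} \<inter> {i. amalg_rel (G i) (H i) (comp i r) []}"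
    using UG.U_ne[OF UG.U_int[OF A2 A1]] by blast
  then show False using amctx.reduced_nontriv[OF amctx_i] by blast
qed

lemma Phi_inj: "inj_on Phi (carrier (amalg_free_product GU HU))"
proof -
  interpret gh: group_hom "amalg_free_product GU HU" "ultraprod AG U" Phi
    using amalg_group[OF UG.UP_group HU_sub] UA.UP_group Phi_hom
    by (simp add: group_hom_def group_hom_axioms_def)
  show ?thesis
  proof (rule gh.trivial_ker_imp_inj)
    show "kernel (amalg_free_product GU HU) (ultraprod AG U) Phi = {\<one>\<^bsub>amalg_free_product GU HU\<^esub>}"
    proof
      show "{\<one>\<^bsub>amalg_free_product GU HU\<^esub>} \<subseteq> kernel (amalg_free_product GU HU) (ultraprod AG U) Phi"
        unfolding kernel_def using gh.hom_one by simp
    next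
      show "kernel (amalg_free_product GU HU) (ultraprod AG U) Phi \<subseteq> {\<one>\<^bsub>amalg_free_product GU HU\<^esub>}"
      proof
        fix x assume "x \<in> kernel (amalg_free_product GU HU) (ultraprod AG U) Phi"
        then have xc: "x \<in> carrier (amalg_free_product GU HU)" and e: "Phi x = \<one>\<^bsub>ultraprod AG U\<^esub>"
          unfolding kernel_def by auto
        obtain w where w: "w \<in> lists (UNIV \<times> carrier GU)" "x = amalg_class GU HU w"
          using xc by (rule amalg_carrierE)
        have oc: "(\<lambda>i. amalg_class (G i) (H i) []) \<in> carrier UA.P"
          unfolding UA.P_carrier using amalg_carrierI by (metis lists.Nil)
        have "ultra_class AG U (\<lambda>i. amalg_class (G i) (H i) (comp i w)) = ultra_class AG U (\<lambda>i. amalg_class (G i) (H i) [])"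
          using e Phi_eq[OF w(1)] w(2) UA.UP_one by (simp add: amalg_one)
        then have "{i. amalg_class (G i) (H i) (comp i w) = amalg_class (G i) (H i) []} \<in> U"
          using UA.class_eq_imp[OF FA[OF w(1)] oc] by simp
        then have "{i. amalg_rel (G i) (H i) (comp i w) []} \<in> U" by (simp add: amalg_class_eq)
        then have "amalg_rel GU HU w []" using K[OF w(1)] by blast
        then show "x \<in> {\<one>\<^bsub>amalg_free_product GU HU\<^esub>}" using w(2) by (simp add: amalg_one amalg_class_eq)
      qed
    qed
  qed
qed

end


theorem lemma2p5:
  fixes G :: "nat \<Rightarrow> 'g monoid" and H :: "nat \<Rightarrow> 'g set" and U :: "nat set set"
  assumes "\<And>i. group (G i)"
    and "\<And>i. subgroup (H i) (G i)"
    and "free_ultrafilter U"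
  shows "\<exists>\<Phi>. \<Phi> \<in> hom (amalg_free_product (ultraprod G U) (ultraprod_sub G H U))
                     (ultraprod (\<lambda>i. amalg_free_product (G i) (H i)) U)
          \<and> inj_on \<Phi> (carrier (amalg_free_product (ultraprod G U) (ultraprod_sub G H U)))
          \<and> (\<forall>j f. (\<forall>i. f i \<in> carrier (G i)) \<longrightarrow>
                \<Phi> (amalg_incl (ultraprod G U) (ultraprod_sub G H U) j (ultra_class G U f))
                  = ultra_class (\<lambda>i. amalg_free_product (G i) (H i)) U
                      (\<lambda>i. amalg_incl (G i) (H i) j (f i)))"
proof -
  interpret M: mainctx G H U using assms by (simp add: mainctx_def)
  show ?thesis using M.Phi_hom M.Phi_inj M.Phi_incl by blast
qed

end
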